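(* Let $P$ be a binary matrix that contains none of $Q_1,Q_2,Q_3,Q_4$ as an interval minor. Then (1) $P$ avoids $D_2$, or (2) $P$ avoids $\overline{D}_2$, or (3) $P$ can be covered by three lines.
   Context: Rows are numbered top to bottom, columns left to right; $(i,j)$ is the entry in row $i$, column $j$; $\mathrm{supp}$ is the set of 1-entries; $(a,b]=\{a+1,\dots,b\}$. A pattern $P\in\{0,1\}^{k\times\ell}$ is an interval minor of $M\in\{0,1\}^{m\times n}$ if there are integers $0=r_0<\dots<r_k=m$ and $0=c_0<\dots<c_\ell=n$ such that for each 1-entry $(i,j)$ of $P$ the submatrix of $M$ on rows $(r_{i-1},r_i]$ and columns $(c_{j-1},c_j]$ contains a 1-entry; otherwise $M$ avoids $P$. $Q_1,\dots,Q_4\in\{0,1\}^{3\times3}$ have supports $\{(1,2),(2,1),(3,3)\}$, $\{(1,2),(2,3),(3,1)\}$, $\{(1,1),(2,3),(3,2)\}$, $\{(1,3),(2,1),(3,2)\}$. $D_2\in\{0,1\}^{2\times 2}$ has support $\{(1,1),(2,2)\}$ and $\overline D_2$ has support $\{(1,2),(2,1)\}$. A line is a row or a column; $M$ can be covered by $t$ lines if there are $t$ lines such that every 1-entry of $M$ lies on one of them. *)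

theory Defs
  imports Main
begin

(* A binary m x n matrix is represented by its dimensions together with its
   support (set of 1-entries), a subset of {1..m} x {1..n}.  Rows/columns are
   1-indexed as in the paper. *)
record bmatrix =
  nrows :: nat
  ncols :: nat
  supp  :: "(nat \<times> nat) set"

definition wf_bmatrix :: "bmatrix \<Rightarrow> bool" where
  "wf_bmatrix M \<longleftrightarrow> supp M \<subseteq> {1..nrows M} \<times> {1..ncols M}"

definition interval_minor :: "bmatrix \<Rightarrow> bmatrix \<Rightarrow> bool" where
  "interval_minor P M \<longleftrightarrow>
     (\<exists>r c :: nat \<Rightarrow> nat.
        r 0 = 0 \<and> r (nrows P) = nrows M \<and> (\<forall>i < nrows P. r i < r (Suc i)) \<and>
        c 0 = 0 \<and> c (ncols P) = ncols M \<and> (\<forall>j < ncols P. c j < c (Suc j)) \<and>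
        (\<forall>(i, j) \<in> supp P. \<exists>(a, b) \<in> supp M.
            a \<in> {r (i - 1)<..r i} \<and> b \<in> {c (j - 1)<..c j}))"

definition avoids :: "bmatrix \<Rightarrow> bmatrix \<Rightarrow> bool" where
  "avoids M P \<longleftrightarrow> \<not> interval_minor P M"

definition Q1 :: bmatrix where "Q1 = \<lparr>nrows = 3, ncols = 3, supp = {(1,2),(2,1),(3,3)}\<rparr>"
definition Q2 :: bmatrix where "Q2 = \<lparr>nrows = 3, ncols = 3, supp = {(1,2),(2,3),(3,1)}\<rparr>"
definition Q3 :: bmatrix where "Q3 = \<lparr>nrows = 3, ncols = 3, supp = {(1,1),(2,3),(3,2)}\<rparr>"
definition Q4 :: bmatrix where "Q4 = \<lparr>nrows = 3, ncols = 3, supp = {(1,3),(2,1),(3,2)}\<rparr>"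
definition D2 :: bmatrix where "D2 = \<lparr>nrows = 2, ncols = 2, supp = {(1,1),(2,2)}\<rparr>"
definition D2bar :: bmatrix where "D2bar = \<lparr>nrows = 2, ncols = 2, supp = {(1,2),(2,1)}\<rparr>"

definition is_line :: "bmatrix \<Rightarrow> nat + nat \<Rightarrow> bool" where
  "is_line M l \<longleftrightarrow> (case l of Inl i \<Rightarrow> 1 \<le> i \<and> i \<le> nrows M
                                | Inr j \<Rightarrow> 1 \<le> j \<and> j \<le> ncols M)"

definition on_line :: "nat \<times> nat \<Rightarrow> nat + nat \<Rightarrow> bool" where
  "on_line p l \<longleftrightarrow> (case l of Inl i \<Rightarrow> fst p = i | Inr j \<Rightarrow> snd p = j)"

(* M can be covered by t lines: there are t lines (a set of at most t lines; lines may
   be repeated in the informal notion, so "at most t" is equivalent when enough lines exist,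
   and trivially needed otherwise) such that every 1-entry lies on one of them. *)
definition coverable_by :: "bmatrix \<Rightarrow> nat \<Rightarrow> bool" where
  "coverable_by M t \<longleftrightarrow>
     (\<exists>L. finite L \<and> card L \<le> t \<and> (\<forall>l \<in> L. is_line M l) \<and>
          (\<forall>p \<in> supp M. \<exists>l \<in> L. on_line p l))"

end

theory Submission
  imports Defs
begin


lemma hall:
  assumes "finite I" "\<forall>i\<in>I. finite (A i)" "\<forall>J\<subseteq>I. card J \<le> card (\<Union>(A ` J))"
  shows "\<exists>f. inj_on f I \<and> (\<forall>i\<in>I. f i \<in> A i)"
  using assms
proof (induction "card I" arbitrary: I A rule: less_induct)
  case less
  note IH = less.hyps
  show ?case
  proof (cases "I = {}")
    case True then show ?thesis by auto
  next
    case ne: False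
    show ?thesis
    proof (cases "\<exists>J. J \<noteq> {} \<and> J \<subset> I \<and> card (\<Union>(A ` J)) = card J")
      case True
      then obtain J where J: "J \<noteq> {}" "J \<subset> I" "card (\<Union>(A ` J)) = card J" by blast
      have fJ: "finite J" using J(2) less.prems(1) finite_subset by blast
      have "card J < card I" using J(2) less.prems(1) psubset_card_mono by blast
      then obtain f1 where f1: "inj_on f1 J" "\<forall>i\<in>J. f1 i \<in> A i"
        using IH[of J A] fJ less.prems J(2) by auto
      define B where "B = (\<lambda>i. A i - \<Union>(A ` J))"
      have fIJ: "finite (I - J)" using less.prems(1) by auto
      have c2: "card (I - J) < card I"
      proof -
        have "card (I - J) = card I - card J" using J(2) fJ by (simp add: card_Diff_subset)
        moreover have "card J > 0" using J(1) fJ by auto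
        moreover have "card J \<le> card I" using J(2) less.prems(1) by (simp add: card_mono)
        ultimately show ?thesis by linarith
      qed
      have hB: "\<forall>K\<subseteq>I - J. card K \<le> card (\<Union>(B ` K))"
      proof (intro allI impI)
        fix K assume K: "K \<subseteq> I - J"
        have fK: "finite K" using K fIJ finite_subset by blast
        have eq: "\<Union>(B ` K) = \<Union>(A ` (K \<union> J)) - \<Union>(A ` J)" unfolding B_def by auto
        have finU: "finite (\<Union>(A ` (K \<union> J)))" using K J(2) less.prems(2) fK fJ by auto
        have sub: "\<Union>(A ` J) \<subseteq> \<Union>(A ` (K \<union> J))" by auto
        have "card (\<Union>(B ` K)) = card (\<Union>(A ` (K \<union> J))) - card (\<Union>(A ` J))"
          unfolding eq using finU sub by (simp add: card_Diff_subset finite_subset)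
        moreover have "card (K \<union> J) \<le> card (\<Union>(A ` (K \<union> J)))"
          using less.prems(3) K J(2) by (meson Diff_subset le_sup_iff psubset_imp_subset subset_trans)
        moreover have "card (K \<union> J) = card K + card J"
          using K fK fJ by (subst card_Un_disjoint) auto
        ultimately show "card K \<le> card (\<Union>(B ` K))" using J(3) by linarith
      qed
      have "\<forall>i\<in>I - J. finite (B i)" using less.prems(2) unfolding B_def by auto
      then obtain f2 where f2: "inj_on f2 (I - J)" "\<forall>i\<in>I - J. f2 i \<in> B i"
        using IH[of "I - J" B] c2 fIJ hB by auto
      define f where "f = (\<lambda>i. if i \<in> J then f1 i else f2 i)"
      have "inj_on f I"
        unfolding inj_on_def f_def
      proof (intro ballI impI)
        fix x y assume xy: "x \<in> I" "y \<in> I" "(if x \<in> J then f1 x else f2 x) = (if y \<in> J then f1 y else f2 y)"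
        show "x = y"
        proof (cases "x \<in> J"; cases "y \<in> J")
          assume "x \<in> J" "y \<in> J" then show ?thesis using xy f1(1) by (auto simp: inj_on_def)
        next
          assume a: "x \<in> J" "y \<notin> J"
          then have "f1 x \<in> \<Union>(A ` J)" using f1(2) by auto
          moreover have "f2 y \<notin> \<Union>(A ` J)" using f2(2) a xy(2) unfolding B_def by auto
          ultimately show ?thesis using xy(3) a by auto
        next
          assume a: "x \<notin> J" "y \<in> J"
          then have "f1 y \<in> \<Union>(A ` J)" using f1(2) by auto
          moreover have "f2 x \<notin> \<Union>(A ` J)" using f2(2) a xy(1) unfolding B_def by auto
          ultimately show ?thesis using xy(3) a by auto
        next
          assume "x \<notin> J" "y \<notin> J" then show ?thesis using xy f2(1) by (auto simp: inj_on_def)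
        qed
      qed
      moreover have "\<forall>i\<in>I. f i \<in> A i" using f1(2) f2(2) unfolding f_def B_def by auto
      ultimately show ?thesis by blast
    next
      case False
      then have strict: "\<forall>K. K \<noteq> {} \<longrightarrow> K \<subset> I \<longrightarrow> card K < card (\<Union>(A ` K))"
        using less.prems(3) by (metis le_neq_implies_less psubset_imp_subset)
      obtain i0 where i0: "i0 \<in> I" using ne by auto
      have "card {i0} \<le> card (A i0)" using less.prems(3) i0 by (metis empty_subsetI insert_subset image_insert image_empty cSup_singleton)
      then have "A i0 \<noteq> {}" by auto
      then obtain x where x: "x \<in> A i0" by auto
      define B where "B = (\<lambda>i. A i - {x})"
      have c2: "card (I - {i0}) < card I" using i0 less.prems(1) by (meson card_Diff1_less)
      have hB: "\<forall>K\<subseteq>I - {i0}. card K \<le> card (\<Union>(B ` K))"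
      proof (intro allI impI)
        fix K assume K: "K \<subseteq> I - {i0}"
        show "card K \<le> card (\<Union>(B ` K))"
        proof (cases "K = {}")
          case True then show ?thesis by simp
        next
          case False
          have "K \<subset> I" using K i0 by auto
          then have lt: "card K < card (\<Union>(A ` K))" using strict False by auto
          have fK: "finite K" using K less.prems(1) finite_subset by blast
          have fin: "finite (\<Union>(A ` K))" using fK K less.prems(2) by auto
          have eq: "\<Union>(B ` K) = \<Union>(A ` K) - {x}" unfolding B_def by auto
          have "card (\<Union>(A ` K)) - 1 \<le> card (\<Union>(A ` K) - {x})"
            using fin by (cases "x \<in> \<Union>(A ` K)") (auto simp: card_Diff_singleton)
          then show ?thesis unfolding eq using lt by linarith
        qed
      qed
      have "\<forall>i\<in>I - {i0}. finite (B i)" using less.prems(2) unfolding B_def by auto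
      then obtain f2 where f2: "inj_on f2 (I - {i0})" "\<forall>i\<in>I - {i0}. f2 i \<in> B i"
        using IH[of "I - {i0}" B] c2 less.prems(1) hB by auto
      define f where "f = f2(i0 := x)"
      have "inj_on f (I - {i0})" using f2(1) unfolding f_def by (simp add: inj_on_def)
      moreover have "f i0 \<notin> f ` (I - {i0})" using f2(2) unfolding f_def B_def by auto
      ultimately have "inj_on f (insert i0 (I - {i0}))" by (simp del: insert_Diff_single)
      then have "inj_on f I" using i0 by (metis insert_Diff)
      moreover have "\<forall>i\<in>I. f i \<in> A i" using f2(2) x unfolding f_def B_def by auto
      ultimately show ?thesis by blast
    qed
  qed
qed



lemma konig3:
  fixes S :: "(nat \<times> nat) set"
  assumes finS: "finite S"
    and nom: "\<not>(\<exists>M\<subseteq>S. card M = 4 \<and> inj_on fst M \<and> inj_on snd M)"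
  shows "\<exists>R C. R \<subseteq> fst ` S \<and> C \<subseteq> snd ` S \<and> card R + card C \<le> 3 \<and> (\<forall>p\<in>S. fst p \<in> R \<or> snd p \<in> C)"
proof (cases "card (fst ` S) \<le> 3")
  case True
  then show ?thesis by (rule_tac x="fst ` S" in exI, rule_tac x="{}" in exI) auto
next
  case False
  define I where "I = fst ` S"
  define d where "d = card I - 4"
  define A where "A = (\<lambda>i. Inl ` {b. (i,b) \<in> S} \<union> Inr ` {..<d} :: (nat + nat) set)"
  have finI: "finite I" using finS I_def by auto
  have cI: "card I \<ge> 4" using False I_def by auto
  have finA: "\<forall>i\<in>I. finite (A i)"
  proof
    fix i have "{b. (i,b) \<in> S} \<subseteq> snd ` S" by force
    then have "finite {b. (i,b) \<in> S}" using finS finite_subset by blast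
    then show "finite (A i)" unfolding A_def by auto
  qed
  have "\<not> (\<forall>J\<subseteq>I. card J \<le> card (\<Union>(A ` J)))"
  proof
    assume h: "\<forall>J\<subseteq>I. card J \<le> card (\<Union>(A ` J))"
    obtain f where f: "inj_on f I" "\<forall>i\<in>I. f i \<in> A i" using hall[OF finI finA h] by blast
    define I1 where "I1 = {i\<in>I. \<exists>b. f i = Inl b}"
    have "f ` (I - I1) \<subseteq> Inr ` {..<d}" using f(2) unfolding I1_def A_def by auto
    moreover have "inj_on f (I - I1)" using f(1) by (rule inj_on_subset) auto
    ultimately have "card (I - I1) \<le> card (Inr ` {..<d} :: (nat+nat) set)"
      by (metis card_inj_on_le finite_imageI finite_lessThan)
    also have "\<dots> = d" by (simp add: card_image)
    finally have "card (I - I1) \<le> d" .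
    moreover have "card (I - I1) = card I - card I1" using finI by (simp add: I1_def card_Diff_subset)
    moreover have "card I1 \<le> card I" using finI by (simp add: I1_def card_mono)
    ultimately have c1: "card I1 \<ge> 4" using cI unfolding d_def by linarith
    have finI1: "finite I1" using finI I1_def by auto
    obtain I2 where I2: "I2 \<subseteq> I1" "card I2 = 4" using obtain_subset_with_card_n[OF c1] by metis
    define M where "M = (\<lambda>i. (i, projl (f i))) ` I2"
    have inM: "\<forall>i\<in>I2. f i = Inl (projl (f i))" using I2(1) unfolding I1_def by auto
    have "M \<subseteq> S"
    proof
      fix p assume "p \<in> M"
      then obtain i where i: "i \<in> I2" "p = (i, projl (f i))" unfolding M_def by auto
      have "f i \<in> A i" using f(2) i(1) I2(1) I1_def by auto
      then show "p \<in> S" using inM i unfolding A_def by (metis (no_types, lifting) Un_iff imageE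
            mem_Collect_eq sum.distinct(1) sum.inject(1))
    qed
    moreover have injM: "inj_on (\<lambda>i. (i, projl (f i))) I2" by (auto simp: inj_on_def)
    then have "card M = 4" using I2(2) unfolding M_def by (simp add: card_image)
    moreover have "inj_on fst M" unfolding M_def by (auto simp: inj_on_def)
    moreover have "inj_on snd M"
      unfolding M_def inj_on_def
    proof (clarsimp)
      fix x y assume xy: "x \<in> I2" "y \<in> I2" "projl (f x) = projl (f y)"
      then have "f x = f y" using inM by metis
      then show "x = y" using f(1) xy I2(1) unfolding I1_def inj_on_def by auto
    qed
    ultimately show False using nom by blast
  qed
  then obtain J where J: "J \<subseteq> I" "card (\<Union>(A ` J)) < card J" by (meson not_le)
  have Jne: "J \<noteq> {}" using J(2) by auto
  define N where "N = {b. \<exists>i\<in>J. (i,b) \<in> S}"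
  have NS: "N \<subseteq> snd ` S" unfolding N_def by force
  have finN: "finite N" using NS finS finite_subset by blast
  have "\<Union>(A ` J) = Inl ` N \<union> Inr ` {..<d}" using Jne unfolding A_def N_def by auto
  have "card (\<Union>(A ` J)) = card N + d"
  proof -
    have "card (Inl ` N \<union> Inr ` {..<d} :: (nat+nat) set) = card (Inl ` N :: (nat+nat) set) + card (Inr ` {..<d} :: (nat+nat) set)"
      using finN by (intro card_Un_disjoint) auto
    also have "\<dots> = card N + d" by (simp add: card_image)
    finally show ?thesis using \<open>\<Union>(A ` J) = Inl ` N \<union> Inr ` {..<d}\<close> by simp
  qed
  moreover have "card (I - J) = card I - card J" using J(1) finI by (simp add: card_Diff_subset finite_subset)
  moreover have "card J \<le> card I" using J(1) finI by (simp add: card_mono)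
  ultimately have "card (I - J) + card N \<le> 3" using J(2) cI unfolding d_def by linarith
  moreover have "\<forall>p\<in>S. fst p \<in> I - J \<or> snd p \<in> N" unfolding I_def N_def by force
  ultimately show ?thesis using NS I_def by blast
qed



definition ori :: "nat \<times> nat \<Rightarrow> nat \<times> nat \<Rightarrow> bool" where
  "ori x y \<longleftrightarrow> (fst x < fst y \<longleftrightarrow> snd x < snd y)"

definition mono3 :: "(nat \<times> nat) set \<Rightarrow> bool" where
  "mono3 S \<longleftrightarrow> (\<forall>x\<in>S. \<forall>y\<in>S. \<forall>z\<in>S. fst x < fst y \<longrightarrow> fst y < fst z \<longrightarrow>
     snd x \<noteq> snd y \<longrightarrow> snd y \<noteq> snd z \<longrightarrow> snd x \<noteq> snd z \<longrightarrow>
     (snd x < snd y \<and> snd y < snd z) \<or> (snd y < snd x \<and> snd z < snd y))"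

lemma ori_sym: "fst x \<noteq> fst y \<Longrightarrow> snd x \<noteq> snd y \<Longrightarrow> ori x y = ori y x"
  unfolding ori_def by auto

lemma triple:
  assumes H: "mono3 S" and S: "x \<in> S" "y \<in> S" "z \<in> S"
    and d: "fst x \<noteq> fst y" "fst x \<noteq> fst z" "fst y \<noteq> fst z"
      "snd x \<noteq> snd y" "snd x \<noteq> snd z" "snd y \<noteq> snd z"
  shows "ori x y = ori x z"
proof -
  have h: "\<And>a b c. a \<in> {x,y,z} \<Longrightarrow> b \<in> {x,y,z} \<Longrightarrow> c \<in> {x,y,z} \<Longrightarrow>
     fst a < fst b \<Longrightarrow> fst b < fst c \<Longrightarrow> snd a \<noteq> snd b \<Longrightarrow> snd b \<noteq> snd c \<Longrightarrow> snd a \<noteq> snd c \<Longrightarrow>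
     (snd a < snd b \<and> snd b < snd c) \<or> (snd b < snd a \<and> snd c < snd b)"
    using H S unfolding mono3_def by blast
  show ?thesis
  proof (cases "fst x < fst y"; cases "fst x < fst z"; cases "fst y < fst z")
  qed (use h[of x y z] h[of x z y] h[of y x z] h[of y z x] h[of z x y] h[of z y x] d in
      \<open>auto simp: ori_def\<close>)
qed

lemma core:
  assumes H: "mono3 S" and MS: "M \<subseteq> S" and cM: "card M = 4"
    and iM: "inj_on fst M" "inj_on snd M"
    and oM: "\<forall>a\<in>M. \<forall>b\<in>M. a \<noteq> b \<longrightarrow> ori a b = oo"
    and q: "q1 \<in> S" "q2 \<in> S" "fst q1 \<noteq> fst q2" "snd q1 \<noteq> snd q2" "ori q1 q2 \<noteq> oo"
  shows False
proof -
  have finM: "finite M" using cM by (metis card.infinite zero_neq_numeral)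
  define U where "U = (\<lambda>q. {x\<in>M. fst x \<noteq> fst q \<and> snd x \<noteq> snd q})"
  have dist: "\<And>a b. a \<in> M \<Longrightarrow> b \<in> M \<Longrightarrow> a \<noteq> b \<Longrightarrow> fst a \<noteq> fst b \<and> snd a \<noteq> snd b"
    using iM by (meson inj_on_def)
  have cU: "card (U q) \<ge> 2" for q
  proof -
    have "M - U q \<subseteq> {x\<in>M. fst x = fst q} \<union> {x\<in>M. snd x = snd q}" unfolding U_def by auto
    moreover have "card {x\<in>M. fst x = fst q} \<le> 1"
    proof -
      have "inj_on fst {x\<in>M. fst x = fst q}" using iM(1) by (rule inj_on_subset) auto
      then have "card {x\<in>M. fst x = fst q} = card (fst ` {x\<in>M. fst x = fst q})" by (rule card_image[symmetric])
      also have "\<dots> \<le> card {fst q}" by (rule card_mono) auto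
      finally show ?thesis by simp
    qed
    moreover have "card {x\<in>M. snd x = snd q} \<le> 1"
    proof -
      have "inj_on snd {x\<in>M. snd x = snd q}" using iM(2) by (rule inj_on_subset) auto
      then have "card {x\<in>M. snd x = snd q} = card (snd ` {x\<in>M. snd x = snd q})" by (rule card_image[symmetric])
      also have "\<dots> \<le> card {snd q}" by (rule card_mono) auto
      finally show ?thesis by simp
    qed
    ultimately have "card (M - U q) \<le> 2"
    proof -
      assume a: "M - U q \<subseteq> {x\<in>M. fst x = fst q} \<union> {x\<in>M. snd x = snd q}"
        "card {x\<in>M. fst x = fst q} \<le> 1" "card {x\<in>M. snd x = snd q} \<le> 1"
      have "card (M - U q) \<le> card ({x\<in>M. fst x = fst q} \<union> {x\<in>M. snd x = snd q})"
        using a(1) finM by (intro card_mono) auto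
      also have "\<dots> \<le> card {x\<in>M. fst x = fst q} + card {x\<in>M. snd x = snd q}"
        by (rule card_Un_le)
      finally show ?thesis using a(2,3) by linarith
    qed
    moreover have "card (M - U q) = card M - card (U q)" using finM
      by (simp add: U_def card_Diff_subset)
    moreover have "card (U q) \<le> card M" using finM by (simp add: U_def card_mono)
    ultimately show ?thesis using cM by linarith
  qed
  have comp: "ori q x = oo" if "q \<in> S" "x \<in> U q" for q x
  proof -
    have "card (U q - {x}) \<ge> 1" using cU[of q] that finM
      by (simp add: U_def)
    then obtain y where y: "y \<in> U q" "y \<noteq> x"
      by (metis Diff_iff One_nat_def card.empty ex_in_conv insertCI not_one_le_zero)
    have xM: "x \<in> M" "y \<in> M" using that y unfolding U_def by auto
    have "ori x q = ori x y"
      using triple[OF H, of x q y] MS xM that y dist[of x y] unfolding U_def by auto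
    then have "ori x q = oo" using oM xM y by auto
    then show ?thesis using ori_sym[of x q] that unfolding U_def by auto
  qed
  have disj: "U q1 \<inter> U q2 = {}"
  proof (rule ccontr)
    assume "U q1 \<inter> U q2 \<noteq> {}"
    then obtain x where x: "x \<in> U q1" "x \<in> U q2" by auto
    have "ori q1 q2 = ori q1 x"
      using triple[OF H, of q1 q2 x] MS x q unfolding U_def by auto
    then show False using comp[OF q(1) x(1)] q(5) by simp
  qed
  have sub: "U q1 \<subseteq> M" "U q2 \<subseteq> M" unfolding U_def by auto
  have "card (U q1 \<union> U q2) = card (U q1) + card (U q2)"
    using disj sub finM by (intro card_Un_disjoint) (auto intro: finite_subset)
  moreover have "card (U q1 \<union> U q2) \<le> 4" using sub finM cM by (metis card_mono le_sup_iff)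
  ultimately have c2: "card (U q1) = 2" "card (U q2) = 2" "card (U q1 \<union> U q2) = 4"
    using cU[of q1] cU[of q2] by linarith+
  have unM: "U q1 \<union> U q2 = M" using c2(3) cM sub finM by (metis card_subset_eq le_sup_iff)
  have blocked: "fst y \<noteq> fst w \<Longrightarrow> snd y \<noteq> snd w \<Longrightarrow>
      (fst y = fst q \<or> snd y = snd q) \<Longrightarrow> (fst w = fst q \<or> snd w = snd q) \<Longrightarrow>
      (fst q = fst y \<and> snd q = snd w) \<or> (fst q = fst w \<and> snd q = snd y)" for y w q :: "nat \<times> nat"
    by auto
  obtain y w where yw: "y \<in> U q2" "w \<in> U q2" "y \<noteq> w" "fst q1 = fst y" "snd q1 = snd w"
  proof -
    obtain a b where ab: "U q2 = {a,b}" "a \<noteq> b" using c2(2) by (meson card_2_iff)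
    have "a \<in> M" "b \<in> M" "a \<notin> U q1" "b \<notin> U q1" using ab sub disj by auto
    then have "(fst q1 = fst a \<and> snd q1 = snd b) \<or> (fst q1 = fst b \<and> snd q1 = snd a)"
      using blocked[of a b q1] dist[of a b] ab(2) unfolding U_def by auto
    then show ?thesis
    proof (elim disjE conjE)
      assume "fst q1 = fst a" "snd q1 = snd b"
      then show ?thesis by (intro that[of a b]) (simp_all add: ab)
    next
      assume "fst q1 = fst b" "snd q1 = snd a"
      then show ?thesis by (intro that[of b a]) (use ab in auto)
    qed
  qed
  obtain s t where st: "s \<in> U q1" "t \<in> U q1" "s \<noteq> t" "fst q2 = fst s" "snd q2 = snd t"
  proof -
    obtain a b where ab: "U q1 = {a,b}" "a \<noteq> b" using c2(1) by (meson card_2_iff)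
    have "a \<in> M" "b \<in> M" "a \<notin> U q2" "b \<notin> U q2" using ab sub disj by auto
    then have "(fst q2 = fst a \<and> snd q2 = snd b) \<or> (fst q2 = fst b \<and> snd q2 = snd a)"
      using blocked[of a b q2] dist[of a b] ab(2) unfolding U_def by auto
    then show ?thesis
    proof (elim disjE conjE)
      assume "fst q2 = fst a" "snd q2 = snd b"
      then show ?thesis by (intro that[of a b]) (simp_all add: ab)
    next
      assume "fst q2 = fst b" "snd q2 = snd a"
      then show ?thesis by (intro that[of b a]) (use ab in auto)
    qed
  qed
  have M4: "y \<in> M" "w \<in> M" "s \<in> M" "t \<in> M" using yw st sub by auto
  have ne: "w \<noteq> s" "w \<noteq> t" using yw st disj by auto
  have o1: "ori q1 s = oo" using comp[OF q(1) st(1)] .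
  have o2: "ori w s = oo" using oM M4 ne by auto
  have o3: "ori q2 w = oo" using comp[OF q(2) yw(2)] .
  have o4: "ori t w = oo" using oM M4 ne by auto
  have d1: "fst w \<noteq> fst s" "snd w \<noteq> snd s" "fst w \<noteq> fst t" "snd w \<noteq> snd t"
    using dist M4 ne by auto
  have "ori q1 q2 = oo"
    using o1 o2 o3 o4 d1 yw(4,5) st(4,5) q(3,4) unfolding ori_def by auto
  then show False using q(5) by simp
qed



lemma d2_pts:
  assumes "\<not> avoids P D2"
  shows "\<exists>p\<in>supp P. \<exists>q\<in>supp P. fst p < fst q \<and> snd p < snd q"
proof -
  obtain r c where rc: "\<forall>(i, j) \<in> supp D2. \<exists>(a, b) \<in> supp P.
            a \<in> {r (i - 1)<..r i} \<and> b \<in> {c (j - 1)<..c j}"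
    using assms unfolding avoids_def interval_minor_def by blast
  have "\<exists>(a, b) \<in> supp P. a \<in> {r 0<..r 1} \<and> b \<in> {c 0<..c 1}"
    using rc unfolding D2_def by auto
  moreover have "\<exists>(a, b) \<in> supp P. a \<in> {r 1<..r 2} \<and> b \<in> {c 1<..c 2}"
    using rc unfolding D2_def by auto
  ultimately obtain a b a' b' where "(a,b) \<in> supp P" "(a',b') \<in> supp P"
    "a \<le> r 1" "r 1 < a'" "b \<le> c 1 \<and> c 1 < b'" by fastforce
  then show ?thesis by (intro bexI[of _ "(a,b)"] bexI[of _ "(a',b')"]) auto
qed

lemma d2bar_pts:
  assumes "\<not> avoids P D2bar"
  shows "\<exists>p\<in>supp P. \<exists>q\<in>supp P. fst p < fst q \<and> snd q < snd p"
proof -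
  obtain r c where rc: "\<forall>(i, j) \<in> supp D2bar. \<exists>(a, b) \<in> supp P.
            a \<in> {r (i - 1)<..r i} \<and> b \<in> {c (j - 1)<..c j}"
    using assms unfolding avoids_def interval_minor_def by blast
  have "\<exists>(a, b) \<in> supp P. a \<in> {r 0<..r 1} \<and> b \<in> {c 1<..c 2}"
    using rc unfolding D2bar_def by auto
  moreover have "\<exists>(a, b) \<in> supp P. a \<in> {r 1<..r 2} \<and> b \<in> {c 0<..c 1}"
    using rc unfolding D2bar_def by auto
  ultimately obtain a b a' b' where "(a,b) \<in> supp P" "(a',b') \<in> supp P"
    "a \<le> r 1" "r 1 < a'" "b' \<le> c 1 \<and> c 1 < b" by fastforce
  then show ?thesis by (intro bexI[of _ "(a,b)"] bexI[of _ "(a',b')"]) auto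
qed

lemma im3:
  assumes "1 \<le> u1" "u1 < u2" "u2 < u3" "u3 \<le> nrows P"
    "1 \<le> v1" "v1 < v2" "v2 < v3" "v3 \<le> ncols P"
    "nrows Q = 3" "ncols Q = 3"
    "\<forall>(i,j)\<in>supp Q. i \<in> {1,2,3} \<and> j \<in> {1,2,3} \<and>
        ((if i = 1 then u1 else if i = 2 then u2 else u3),
         (if j = 1 then v1 else if j = 2 then v2 else v3)) \<in> supp P"
  shows "interval_minor Q P"
proof -
  define r where "r = (\<lambda>i::nat. if i = 0 then 0 else if i = 1 then u1 else if i = 2 then u2 else nrows P)"
  define c where "c = (\<lambda>i::nat. if i = 0 then 0 else if i = 1 then v1 else if i = 2 then v2 else ncols P)"
  have "r 0 = 0 \<and> r (nrows Q) = nrows P \<and> (\<forall>i < nrows Q. r i < r (Suc i)) \<and>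
        c 0 = 0 \<and> c (ncols Q) = ncols P \<and> (\<forall>j < ncols Q. c j < c (Suc j))"
    using assms unfolding r_def c_def by (auto simp: less_Suc_eq numeral_3_eq_3)
  moreover have "\<forall>(i, j) \<in> supp Q. \<exists>(a, b) \<in> supp P.
            a \<in> {r (i - 1)<..r i} \<and> b \<in> {c (j - 1)<..c j}"
  proof (clarify)
    fix i j assume ij: "(i,j) \<in> supp Q"
    then have h: "i \<in> {1,2,3}" "j \<in> {1,2,3}"
      "((if i = 1 then u1 else if i = 2 then u2 else u3),
         (if j = 1 then v1 else if j = 2 then v2 else v3)) \<in> supp P" using assms(11) by auto
    show "\<exists>(a, b) \<in> supp P. a \<in> {r (i - 1)<..r i} \<and> b \<in> {c (j - 1)<..c j}"
      apply (rule bexI[OF _ h(3)])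
      using h(1,2) assms(1-8) unfolding r_def c_def by auto
  qed
  ultimately show ?thesis unfolding interval_minor_def by blast
qed

lemma mono3_P:
  assumes wf: "wf_bmatrix P"
    and a: "avoids P Q1" "avoids P Q2" "avoids P Q3" "avoids P Q4"
  shows "mono3 (supp P)"
  unfolding mono3_def
proof (intro ballI impI)
  fix x y z assume xyz: "x \<in> supp P" "y \<in> supp P" "z \<in> supp P"
    and o: "fst x < fst y" "fst y < fst z" "snd x \<noteq> snd y" "snd y \<noteq> snd z" "snd x \<noteq> snd z"
  have b: "1 \<le> fst x" "fst z \<le> nrows P" "1 \<le> snd x" "snd x \<le> ncols P"
    "1 \<le> snd y" "snd y \<le> ncols P" "1 \<le> snd z" "snd z \<le> ncols P"
    using wf xyz unfolding wf_bmatrix_def by (auto simp: mem_Times_iff)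
  have px: "(fst x, snd x) \<in> supp P" "(fst y, snd y) \<in> supp P" "(fst z, snd z) \<in> supp P"
    using xyz by auto
  show "(snd x < snd y \<and> snd y < snd z) \<or> (snd y < snd x \<and> snd z < snd y)"
  proof (rule ccontr)
    assume nm: "\<not> ?thesis"
    consider "snd y < snd x \<and> snd x < snd z" | "snd z < snd x \<and> snd x < snd y"
      | "snd x < snd z \<and> snd z < snd y" | "snd y < snd z \<and> snd z < snd x"
      using nm o by linarith
    then show False
    proof cases
      case 1
      have "interval_minor Q1 P"
        by (rule im3[of "fst x" "fst y" "fst z" P "snd y" "snd x" "snd z"])
          (use o b 1 px in \<open>auto simp: Q1_def\<close>)
      then show False using a(1) unfolding avoids_def by blast
    next
      case 2
      have "interval_minor Q2 P"
        by (rule im3[of "fst x" "fst y" "fst z" P "snd z" "snd x" "snd y"])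
          (use o b 2 px in \<open>auto simp: Q2_def\<close>)
      then show False using a(2) unfolding avoids_def by blast
    next
      case 3
      have "interval_minor Q3 P"
        by (rule im3[of "fst x" "fst y" "fst z" P "snd x" "snd z" "snd y"])
          (use o b 3 px in \<open>auto simp: Q3_def\<close>)
      then show False using a(3) unfolding avoids_def by blast
    next
      case 4
      have "interval_minor Q4 P"
        by (rule im3[of "fst x" "fst y" "fst z" P "snd y" "snd z" "snd x"])
          (use o b 4 px in \<open>auto simp: Q4_def\<close>)
      then show False using a(4) unfolding avoids_def by blast
    qed
  qed
qed

theorem proposition3p6:
  fixes P :: bmatrix
  assumes "wf_bmatrix P"
    and "avoids P Q1" and "avoids P Q2" and "avoids P Q3" and "avoids P Q4"
  shows "avoids P D2 \<or> avoids P D2bar \<or> coverable_by P 3"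
proof (rule ccontr)
  assume nc: "\<not> ?thesis"
  define S where "S = supp P"
  have SB: "S \<subseteq> {1..nrows P} \<times> {1..ncols P}" using assms(1) unfolding wf_bmatrix_def S_def .
  have finS: "finite S" using SB finite_subset by blast
  have H: "mono3 S" using mono3_P[OF assms] S_def by simp
  obtain p1 p2 where p: "p1 \<in> S" "p2 \<in> S" "fst p1 < fst p2" "snd p1 < snd p2"
    using d2_pts nc S_def by blast
  obtain q1 q2 where q: "q1 \<in> S" "q2 \<in> S" "fst q1 < fst q2" "snd q2 < snd q1"
    using d2bar_pts nc S_def by blast
  have nom: "\<not>(\<exists>M\<subseteq>S. card M = 4 \<and> inj_on fst M \<and> inj_on snd M)"
  proof
    assume "\<exists>M\<subseteq>S. card M = 4 \<and> inj_on fst M \<and> inj_on snd M"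
    then obtain M where M: "M \<subseteq> S" "card M = 4" "inj_on fst M" "inj_on snd M" by blast
    have dist: "\<And>a b. a \<in> M \<Longrightarrow> b \<in> M \<Longrightarrow> a \<noteq> b \<Longrightarrow> fst a \<noteq> fst b \<and> snd a \<noteq> snd b"
      using M(3,4) by (meson inj_on_def)
    obtain a b where ab: "a \<in> M" "b \<in> M" "a \<noteq> b"
    proof -
      have "card M \<ge> 2" using M(2) by simp
      then obtain T where "T \<subseteq> M" "card T = 2" by (metis obtain_subset_with_card_n)
      then obtain a b where "T = {a,b}" "a \<noteq> b" by (meson card_2_iff)
      then show ?thesis using that \<open>T \<subseteq> M\<close> by blast
    qed
    define oo where "oo = ori a b"
    have tri: "ori x y = ori x z" if "x \<in> M" "y \<in> M" "z \<in> M" "x \<noteq> y" "x \<noteq> z" "y \<noteq> z" for x y z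
      using triple[OF H, of x y z] M(1) that dist[of x y] dist[of x z] dist[of y z] by blast
    have sy: "\<And>x y. x \<in> M \<Longrightarrow> y \<in> M \<Longrightarrow> x \<noteq> y \<Longrightarrow> ori x y = ori y x"
      using ori_sym dist by blast
    have fa: "\<And>y. y \<in> M \<Longrightarrow> y \<noteq> a \<Longrightarrow> ori a y = oo"
      unfolding oo_def using tri ab by metis
    have oM: "\<forall>x\<in>M. \<forall>y\<in>M. x \<noteq> y \<longrightarrow> ori x y = oo"
    proof (intro ballI impI)
      fix x y assume xy: "x \<in> M" "y \<in> M" "x \<noteq> y"
      show "ori x y = oo"
      proof (cases "x = a")
        case True then show ?thesis using fa xy by auto
      next
        case xa: False
        show ?thesis
        proof (cases "y = a")
          case True then show ?thesis using fa xy sy xa by metis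
        next
          case False
          then have "ori x y = ori x a" using tri xy ab xa by metis
          also have "\<dots> = ori a x" using sy xy ab xa by metis
          finally show ?thesis using fa xy xa by metis
        qed
      qed
    qed
    show False
    proof (cases oo)
      case True
      have "ori q1 q2 \<noteq> oo" using q True unfolding ori_def by auto
      then show False using core[OF H M oM q(1,2)] q by auto
    next
      case False
      have "ori p1 p2 \<noteq> oo" using p False unfolding ori_def by auto
      then show False using core[OF H M oM p(1,2)] p by auto
    qed
  qed
  obtain R C where RC: "R \<subseteq> fst ` S" "C \<subseteq> snd ` S" "card R + card C \<le> 3"
    "\<forall>p\<in>S. fst p \<in> R \<or> snd p \<in> C"
    using konig3[OF finS nom] by blast
  define L where "L = Inl ` R \<union> Inr ` C"
  have "finite R" "finite C" using RC(1,2) finS by (auto intro: finite_subset)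
  then have finL: "finite L" unfolding L_def by simp
  have "card L \<le> card (Inl ` R :: (nat+nat) set) + card (Inr ` C :: (nat+nat) set)"
    unfolding L_def by (rule card_Un_le)
  also have "\<dots> \<le> card R + card C" by (simp add: card_image)
  finally have cL: "card L \<le> 3" using RC(3) by linarith
  have "fst ` S \<subseteq> {1..nrows P}" "snd ` S \<subseteq> {1..ncols P}" using SB by auto
  then have "R \<subseteq> {1..nrows P}" "C \<subseteq> {1..ncols P}" using RC(1,2) by auto
  then have lines: "\<forall>l\<in>L. is_line P l"
    unfolding L_def is_line_def by auto
  have cov: "\<forall>p \<in> supp P. \<exists>l \<in> L. on_line p l"
  proof
    fix p assume "p \<in> supp P"
    then have "fst p \<in> R \<or> snd p \<in> C" using RC(4) S_def by auto
    then show "\<exists>l \<in> L. on_line p l"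
    proof
      assume "fst p \<in> R" then show ?thesis
        by (intro bexI[of _ "Inl (fst p)"]) (auto simp: L_def on_line_def)
    next
      assume "snd p \<in> C" then show ?thesis
        by (intro bexI[of _ "Inr (snd p)"]) (auto simp: L_def on_line_def)
    qed
  qed
  have "coverable_by P 3" unfolding coverable_by_def using finL cL lines cov by blast
  then show False using nc by blast
qed

end
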